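(* Let $R$ be a schematic semi-graded ring and $J$ a compatible semi-graded ideal of $R$. Then $R/J$ is a schematic semi-graded ring.
   Context: Rings are associative with $1$; modules are left modules. A ring $R$ is semi-graded (SG) if there are additive subgroups $R_n$ ($n\in\mathbb{Z}$) with $R=\bigoplus_n R_n$, $R_mR_n\subseteq\bigoplus_{k\le m+n}R_k$, and $1\in R_0$; positively SG if $R_n=0$ for $n<0$. A submodule $N$ of an SG module $M=\bigoplus M_n$ is an SG submodule if $N=\bigoplus_n(N\cap M_n)$. An SG ideal is a two-sided ideal $J$ that is an SG submodule of $R$; then $R/J$ is SG with $(R/J)_n=(R_n+J)/J$. Let $R'_n=\{r\in R_n: rh\in R_{n+m}\ \forall m,\forall h\in R_m\}$, $R''_n=\{r\in R'_n: hr\in R_{n+m}\ \forall m,\forall h\in R_m\}$, $R'=\bigcup R'_n$, $R''=\bigcup R''_n$ (and similarly $(R/J)'$ for $R/J$). $J$ is compatible if the image of $R'$ in $R/J$ equals $(R/J)'$. A left Ore set $S$ is good if $S\subseteq R''$ and for $s\in S$, $r\in R'$ there are $u\in R'$, $v\in S$ with $us=vr$. For positively SG $R$, $R_{\ge t}$ is the intersection of all SG ideals containing $\bigoplus_{k\ge t}R_k$. $R$ is schematic if it is positively SG, left Noetherian, and there is a finite set $I$ of good left Ore sets $S$ with $S\cap\bigoplus_{k\ge1}R_k\neq\emptyset$ such that for each $(x_S)_{S\in I}\in\prod_{S\in I}S$ there exist $t,m\in\mathbb{N}$ with $(R_{\ge t})^m\subseteq\sum_{S\in I}Rx_S$. 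*)

theory Defs
  imports "HOL-Algebra.Algebra"
begin

definition in_sum :: "('a, 'b) ring_scheme \<Rightarrow> (int \<Rightarrow> 'a set) \<Rightarrow> int set \<Rightarrow> 'a \<Rightarrow> bool" where
  "in_sum R G S x \<longleftrightarrow> (\<exists>f. (\<forall>n. f n \<in> G n) \<and> finite {n. f n \<noteq> \<zero>\<^bsub>R\<^esub>}
      \<and> {n. f n \<noteq> \<zero>\<^bsub>R\<^esub>} \<subseteq> S \<and> x = (\<Oplus>\<^bsub>R\<^esub>n\<in>{n. f n \<noteq> \<zero>\<^bsub>R\<^esub>}. f n))"

definition direct_sum_decomp :: "('a, 'b) ring_scheme \<Rightarrow> (int \<Rightarrow> 'a set) \<Rightarrow> bool" where
  "direct_sum_decomp R G \<longleftrightarrow> (\<forall>n. additive_subgroup (G n) R) \<and>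
     (\<forall>x\<in>carrier R. \<exists>!f. (\<forall>n. f n \<in> G n) \<and> finite {n. f n \<noteq> \<zero>\<^bsub>R\<^esub>}
        \<and> x = (\<Oplus>\<^bsub>R\<^esub>n\<in>{n. f n \<noteq> \<zero>\<^bsub>R\<^esub>}. f n))"

definition semi_graded :: "('a, 'b) ring_scheme \<Rightarrow> (int \<Rightarrow> 'a set) \<Rightarrow> bool" where
  "semi_graded R G \<longleftrightarrow> ring R \<and> direct_sum_decomp R G \<and>
     (\<forall>m n. \<forall>a\<in>G m. \<forall>b\<in>G n. in_sum R G {..m+n} (a \<otimes>\<^bsub>R\<^esub> b)) \<and>
     \<one>\<^bsub>R\<^esub> \<in> G 0"

definition pos_semi_graded :: "('a, 'b) ring_scheme \<Rightarrow> (int \<Rightarrow> 'a set) \<Rightarrow> bool" where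
  "pos_semi_graded R G \<longleftrightarrow> semi_graded R G \<and> (\<forall>n<0. G n = {\<zero>\<^bsub>R\<^esub>})"

definition sg_ideal :: "('a, 'b) ring_scheme \<Rightarrow> (int \<Rightarrow> 'a set) \<Rightarrow> 'a set \<Rightarrow> bool" where
  "sg_ideal R G J \<longleftrightarrow> ideal J R \<and> (\<forall>x\<in>J. in_sum R (\<lambda>n. J \<inter> G n) UNIV x)"

definition quot_grading :: "('a, 'b) ring_scheme \<Rightarrow> 'a set \<Rightarrow> (int \<Rightarrow> 'a set) \<Rightarrow> int \<Rightarrow> 'a set set" where
  "quot_grading R J G n = (\<lambda>r. J +>\<^bsub>R\<^esub> r) ` G n"

definition R'_comp :: "('a, 'b) ring_scheme \<Rightarrow> (int \<Rightarrow> 'a set) \<Rightarrow> int \<Rightarrow> 'a set" where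
  "R'_comp R G n = {r \<in> G n. \<forall>m. \<forall>h\<in>G m. r \<otimes>\<^bsub>R\<^esub> h \<in> G (n + m)}"

definition R''_comp :: "('a, 'b) ring_scheme \<Rightarrow> (int \<Rightarrow> 'a set) \<Rightarrow> int \<Rightarrow> 'a set" where
  "R''_comp R G n = {r \<in> R'_comp R G n. \<forall>m. \<forall>h\<in>G m. h \<otimes>\<^bsub>R\<^esub> r \<in> G (n + m)}"

definition R' :: "('a, 'b) ring_scheme \<Rightarrow> (int \<Rightarrow> 'a set) \<Rightarrow> 'a set" where
  "R' R G = (\<Union>n. R'_comp R G n)"

definition R'' :: "('a, 'b) ring_scheme \<Rightarrow> (int \<Rightarrow> 'a set) \<Rightarrow> 'a set" where
  "R'' R G = (\<Union>n. R''_comp R G n)"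

definition compatible :: "('a, 'b) ring_scheme \<Rightarrow> (int \<Rightarrow> 'a set) \<Rightarrow> 'a set \<Rightarrow> bool" where
  "compatible R G J \<longleftrightarrow>
     (\<lambda>r. J +>\<^bsub>R\<^esub> r) ` R' R G = R' (R Quot J) (quot_grading R J G)"

definition left_ore_set :: "('a, 'b) ring_scheme \<Rightarrow> 'a set \<Rightarrow> bool" where
  "left_ore_set R S \<longleftrightarrow> S \<subseteq> carrier R \<and> \<one>\<^bsub>R\<^esub> \<in> S \<and> \<zero>\<^bsub>R\<^esub> \<notin> S \<and>
     (\<forall>s\<in>S. \<forall>t\<in>S. s \<otimes>\<^bsub>R\<^esub> t \<in> S) \<and>
     (\<forall>s\<in>S. \<forall>r\<in>carrier R. \<exists>s'\<in>S. \<exists>r'\<in>carrier R. s' \<otimes>\<^bsub>R\<^esub> r = r' \<otimes>\<^bsub>R\<^esub> s)"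

definition good_ore_set :: "('a, 'b) ring_scheme \<Rightarrow> (int \<Rightarrow> 'a set) \<Rightarrow> 'a set \<Rightarrow> bool" where
  "good_ore_set R G S \<longleftrightarrow> left_ore_set R S \<and> S \<subseteq> R'' R G \<and>
     (\<forall>s\<in>S. \<forall>r\<in>R' R G. \<exists>u\<in>R' R G. \<exists>v\<in>S. u \<otimes>\<^bsub>R\<^esub> s = v \<otimes>\<^bsub>R\<^esub> r)"

definition R_ge :: "('a, 'b) ring_scheme \<Rightarrow> (int \<Rightarrow> 'a set) \<Rightarrow> nat \<Rightarrow> 'a set" where
  "R_ge R G t = \<Inter>{I. sg_ideal R G I \<and> {x. in_sum R G {int t..} x} \<subseteq> I}"

primrec ideal_pow :: "('a, 'b) ring_scheme \<Rightarrow> 'a set \<Rightarrow> nat \<Rightarrow> 'a set" where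
  "ideal_pow R I 0 = carrier R"
| "ideal_pow R I (Suc m) = ideal_prod R (ideal_pow R I m) I"

definition left_ideal :: "'a set \<Rightarrow> ('a, 'b) ring_scheme \<Rightarrow> bool" where
  "left_ideal I R \<longleftrightarrow> additive_subgroup I R \<and> (\<forall>a\<in>carrier R. \<forall>x\<in>I. a \<otimes>\<^bsub>R\<^esub> x \<in> I)"

definition left_noetherian :: "('a, 'b) ring_scheme \<Rightarrow> bool" where
  "left_noetherian R \<longleftrightarrow> ring R \<and>
     (\<forall>f :: nat \<Rightarrow> 'a set. (\<forall>n. left_ideal (f n) R) \<and> (\<forall>n. f n \<subseteq> f (Suc n))
        \<longrightarrow> (\<exists>N. \<forall>n\<ge>N. f n = f N))"

definition left_ideal_sum :: "('a, 'b) ring_scheme \<Rightarrow> 'c set \<Rightarrow> ('c \<Rightarrow> 'a) \<Rightarrow> 'a set" where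
  "left_ideal_sum R I x = {(\<Oplus>\<^bsub>R\<^esub>i\<in>I. r i \<otimes>\<^bsub>R\<^esub> x i) | r. r \<in> I \<rightarrow> carrier R}"

definition schematic :: "('a, 'b) ring_scheme \<Rightarrow> (int \<Rightarrow> 'a set) \<Rightarrow> bool" where
  "schematic R G \<longleftrightarrow> pos_semi_graded R G \<and> left_noetherian R \<and>
     (\<exists>I :: 'a set set. finite I \<and>
        (\<forall>S\<in>I. good_ore_set R G S \<and> S \<inter> {x. in_sum R G {1..} x} \<noteq> {}) \<and>
        (\<forall>x \<in> Pi I (\<lambda>S. S). \<exists>t m. ideal_pow R (R_ge R G t) m \<subseteq> left_ideal_sum R I x))"

end

theory Submission
  imports Defs
begin


lemma ideal_prod_mono:
  assumes "A \<subseteq> A'" "B \<subseteq> B'" shows "ideal_prod S A B \<subseteq> ideal_prod S A' B'"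
proof
  fix x assume "x \<in> ideal_prod S A B" then show "x \<in> ideal_prod S A' B'"
    by (induct x rule: ideal_prod.induct) (use assms in \<open>auto intro: ideal_prod.intros\<close>)
qed

lemma ideal_prod_carrier:
  assumes "ring S" "A \<subseteq> carrier S" "B \<subseteq> carrier S"
  shows "ideal_prod S A B \<subseteq> carrier S"
proof
  interpret ring S by fact
  fix x assume "x \<in> ideal_prod S A B" then show "x \<in> carrier S"
    by (induct x rule: ideal_prod.induct) (use assms in auto)
qed

lemma ideal_pow_carrier:
  assumes "ring S" "A \<subseteq> carrier S"
  shows "ideal_pow S A m \<subseteq> carrier S"
proof (induct m)
  case 0 show ?case by simp
next
  case (Suc m) then show ?case using ideal_prod_carrier[OF assms(1) Suc assms(2)] by simp
qed

lemma finsum_in_set: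
  assumes "ring S" "finite A" "\<forall>a\<in>A. g a \<in> L" "\<zero>\<^bsub>S\<^esub> \<in> L"
    "\<forall>x\<in>L. \<forall>y\<in>L. x \<oplus>\<^bsub>S\<^esub> y \<in> L" "L \<subseteq> carrier S"
  shows "finsum S g A \<in> L"
  using assms(2,3)
proof (induct A rule: finite_induct)
  case empty
  interpret ring S by fact
  show ?case using assms by simp
next
  case (insert a A)
  interpret ring S by fact
  have "g \<in> A \<rightarrow> carrier S" "g a \<in> carrier S" using insert assms(6) by auto
  then show ?case using insert assms by simp
qed

lemma lis_zero:
  assumes "ring S" "x \<in> Ic \<rightarrow> carrier S"
  shows "\<zero>\<^bsub>S\<^esub> \<in> left_ideal_sum S Ic x"
proof -
  interpret ring S by fact
  have "(\<Oplus>\<^bsub>S\<^esub>i\<in>Ic. (\<lambda>_. \<zero>\<^bsub>S\<^esub>) i \<otimes>\<^bsub>S\<^esub> x i) = \<zero>\<^bsub>S\<^esub>"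
    using assms(2) by (simp add: Pi_def add.finprod_one_eqI)
  then show ?thesis unfolding left_ideal_sum_def
  proof (intro CollectI exI conjI)
    show "(\<lambda>_. \<zero>\<^bsub>S\<^esub>) \<in> Ic \<rightarrow> carrier S" by simp
  qed simp
qed

lemma lis_add:
  assumes "ring S" "x \<in> Ic \<rightarrow> carrier S" "a \<in> left_ideal_sum S Ic x" "b \<in> left_ideal_sum S Ic x"
  shows "a \<oplus>\<^bsub>S\<^esub> b \<in> left_ideal_sum S Ic x"
proof -
  interpret ring S by fact
  obtain r1 where r1: "r1 \<in> Ic \<rightarrow> carrier S" "a = (\<Oplus>\<^bsub>S\<^esub>i\<in>Ic. r1 i \<otimes>\<^bsub>S\<^esub> x i)"
    using assms(3) unfolding left_ideal_sum_def by blast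
  obtain r2 where r2: "r2 \<in> Ic \<rightarrow> carrier S" "b = (\<Oplus>\<^bsub>S\<^esub>i\<in>Ic. r2 i \<otimes>\<^bsub>S\<^esub> x i)"
    using assms(4) unfolding left_ideal_sum_def by blast
  have "a \<oplus>\<^bsub>S\<^esub> b = (\<Oplus>\<^bsub>S\<^esub>i\<in>Ic. r1 i \<otimes>\<^bsub>S\<^esub> x i \<oplus>\<^bsub>S\<^esub> r2 i \<otimes>\<^bsub>S\<^esub> x i)"
    using r1 r2 assms(2) by (simp add: Pi_def)
  also have "\<dots> = (\<Oplus>\<^bsub>S\<^esub>i\<in>Ic. (r1 i \<oplus>\<^bsub>S\<^esub> r2 i) \<otimes>\<^bsub>S\<^esub> x i)"
    using r1 r2 assms(2) by (intro add.finprod_cong') (auto simp: Pi_def l_distr)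
  finally show ?thesis unfolding left_ideal_sum_def using r1 r2 by force
qed

lemma lis_single:
  assumes "ring S" "finite Ic" "x \<in> Ic \<rightarrow> carrier S" "T \<in> Ic" "a \<in> carrier S"
  shows "a \<otimes>\<^bsub>S\<^esub> x T \<in> left_ideal_sum S Ic x"
proof -
  interpret ring S by fact
  define r where "r i = (if T = i then a else \<zero>\<^bsub>S\<^esub>)" for i
  have rc: "r \<in> Ic \<rightarrow> carrier S" using assms by (auto simp: r_def)
  have "(\<Oplus>\<^bsub>S\<^esub>i\<in>Ic. r i \<otimes>\<^bsub>S\<^esub> x i) = (\<Oplus>\<^bsub>S\<^esub>i\<in>Ic. if T = i then a \<otimes>\<^bsub>S\<^esub> x i else \<zero>\<^bsub>S\<^esub>)"
    using assms by (intro add.finprod_cong') (auto simp: r_def Pi_def)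
  also have "\<dots> = a \<otimes>\<^bsub>S\<^esub> x T"
    using assms by (intro add.finprod_singleton[of T Ic "\<lambda>i. a \<otimes>\<^bsub>S\<^esub> x i"]) (auto simp: Pi_def)
  finally have "a \<otimes>\<^bsub>S\<^esub> x T = (\<Oplus>\<^bsub>S\<^esub>i\<in>Ic. r i \<otimes>\<^bsub>S\<^esub> x i)" by simp
  then show ?thesis unfolding left_ideal_sum_def
  proof (intro CollectI exI conjI)
    show "r \<in> Ic \<rightarrow> carrier S" by (rule rc)
  qed
qed

lemma lis_carrier:
  assumes "ring S" "x \<in> Ic \<rightarrow> carrier S"
  shows "left_ideal_sum S Ic x \<subseteq> carrier S"
proof
  interpret ring S by fact
  fix z assume "z \<in> left_ideal_sum S Ic x"
  then obtain r where r: "r \<in> Ic \<rightarrow> carrier S" "z = (\<Oplus>\<^bsub>S\<^esub>i\<in>Ic. r i \<otimes>\<^bsub>S\<^esub> x i)"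
    unfolding left_ideal_sum_def by blast
  have "(\<lambda>i. r i \<otimes>\<^bsub>S\<^esub> x i) \<in> Ic \<rightarrow> carrier S" using r(1) assms(2) by (auto simp: Pi_def)
  then show "z \<in> carrier S" using r(2) by (simp add: finsum_closed)
qed



context
  fixes R :: "('a,'b) ring_scheme" and G :: "int \<Rightarrow> 'a set" and J :: "'a set"
  assumes sg: "semi_graded R G" and sgJ: "sg_ideal R G J"
begin

lemma JI: "ideal J R" using sgJ by (simp add: sg_ideal_def)

interpretation ideal J R by (rule JI)
interpretation Q: ring "R Quot J" by (rule quotient_is_ring)
interpretation h: ring_hom_ring R "R Quot J" "(\<lambda>r. J +>\<^bsub>R\<^esub> r)" by (rule rcos_ring_hom_ring)

lemma carQ: "carrier (R Quot J) = (\<lambda>r. J +>\<^bsub>R\<^esub> r) ` carrier R"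
  unfolding FactRing_def A_RCOSETS_def' by (simp add: UNION_singleton_eq_range)

lemma zeroQ: "\<zero>\<^bsub>R Quot J\<^esub> = J" unfolding FactRing_def by (simp only: ring_record_simps)

lemma piz: "x \<in> carrier R \<Longrightarrow> (J +>\<^bsub>R\<^esub> x = \<zero>\<^bsub>R Quot J\<^esub>) = (x \<in> J)"
proof
  assume x: "x \<in> carrier R" "J +>\<^bsub>R\<^esub> x = \<zero>\<^bsub>R Quot J\<^esub>"
  have "x \<in> J +>\<^bsub>R\<^esub> x" using x(1) by (rule a_rcos_self)
  then show "x \<in> J" using x(2) zeroQ by simp
next
  assume "x \<in> J" then show "J +>\<^bsub>R\<^esub> x = \<zero>\<^bsub>R Quot J\<^esub>" using zeroQ a_rcos_const by simp
qed

lemma Gsg: "additive_subgroup (G n) R" using sg by (simp add: semi_graded_def direct_sum_decomp_def)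

lemma Gsub: "G n \<subseteq> carrier R" using Gsg by (rule additive_subgroup.a_subset)

lemma G0: "\<zero>\<^bsub>R\<^esub> \<in> G n" using Gsg by (rule additive_subgroup.zero_closed)

lemma in_sum_img:
  assumes "in_sum R F S x" "\<And>n. F n \<subseteq> carrier R" "\<And>n. (\<lambda>r. J +>\<^bsub>R\<^esub> r) ` F n \<subseteq> F' n"
  shows "in_sum (R Quot J) F' S (J +>\<^bsub>R\<^esub> x)"
proof -
  from assms(1) obtain f where f: "\<forall>n. f n \<in> F n" "finite {n. f n \<noteq> \<zero>\<^bsub>R\<^esub>}"
    "{n. f n \<noteq> \<zero>\<^bsub>R\<^esub>} \<subseteq> S" "x = (\<Oplus>\<^bsub>R\<^esub>n\<in>{n. f n \<noteq> \<zero>\<^bsub>R\<^esub>}. f n)"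
    unfolding in_sum_def by blast
  define g where "g n = J +>\<^bsub>R\<^esub> f n" for n
  have fc: "f n \<in> carrier R" for n using f(1) assms(2) by blast
  have sub: "{n. g n \<noteq> \<zero>\<^bsub>R Quot J\<^esub>} \<subseteq> {n. f n \<noteq> \<zero>\<^bsub>R\<^esub>}" by (auto simp: g_def)
  have "J +>\<^bsub>R\<^esub> x = finsum (R Quot J) ((\<lambda>r. J +>\<^bsub>R\<^esub> r) \<circ> f) {n. f n \<noteq> \<zero>\<^bsub>R\<^esub>}"
    using f(4) fc by simp
  also have "\<dots> = finsum (R Quot J) g {n. g n \<noteq> \<zero>\<^bsub>R Quot J\<^esub>}"
    by (rule Q.add.finprod_mono_neutral_cong_right) (use f(2) sub fc in \<open>auto simp: g_def\<close>)
  finally have eq: "J +>\<^bsub>R\<^esub> x = finsum (R Quot J) g {n. g n \<noteq> \<zero>\<^bsub>R Quot J\<^esub>}" .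
  have "\<forall>n. g n \<in> F' n" using f(1) assms(3) by (auto simp: g_def)
  moreover have "finite {n. g n \<noteq> \<zero>\<^bsub>R Quot J\<^esub>}" using f(2) sub by (rule finite_subset[rotated])
  ultimately show ?thesis unfolding in_sum_def using eq sub f(3) by blast
qed

lemma lift_fun:
  assumes "\<forall>n. g n \<in> quot_grading R J G n"
  obtains f where "\<forall>n. f n \<in> G n" "\<forall>n. J +>\<^bsub>R\<^esub> f n = g n"
     "{n. f n \<noteq> \<zero>\<^bsub>R\<^esub>} = {n. g n \<noteq> \<zero>\<^bsub>R Quot J\<^esub>}"
proof -
  have "\<forall>n. \<exists>a. a \<in> G n \<and> J +>\<^bsub>R\<^esub> a = g n \<and> (g n = \<zero>\<^bsub>R Quot J\<^esub> \<longrightarrow> a = \<zero>\<^bsub>R\<^esub>)"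
  proof
    fix n show "\<exists>a. a \<in> G n \<and> J +>\<^bsub>R\<^esub> a = g n \<and> (g n = \<zero>\<^bsub>R Quot J\<^esub> \<longrightarrow> a = \<zero>\<^bsub>R\<^esub>)"
    proof (cases "g n = \<zero>\<^bsub>R Quot J\<^esub>")
      case True then show ?thesis using G0 by auto
    next
      case False
      from assms obtain a where "a \<in> G n" "g n = J +>\<^bsub>R\<^esub> a" unfolding quot_grading_def by blast
      then show ?thesis using False by auto
    qed
  qed
  then have "\<exists>f. \<forall>n. f n \<in> G n \<and> J +>\<^bsub>R\<^esub> f n = g n \<and> (g n = \<zero>\<^bsub>R Quot J\<^esub> \<longrightarrow> f n = \<zero>\<^bsub>R\<^esub>)"
    by (rule choice)
  then obtain f where f: "\<forall>n. f n \<in> G n \<and> J +>\<^bsub>R\<^esub> f n = g n \<and> (g n = \<zero>\<^bsub>R Quot J\<^esub> \<longrightarrow> f n = \<zero>\<^bsub>R\<^esub>)"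
    by (elim exE)
  have "{n. f n \<noteq> \<zero>\<^bsub>R\<^esub>} = {n. g n \<noteq> \<zero>\<^bsub>R Quot J\<^esub>}"
  proof (intro Collect_cong iffI)
    fix n assume "f n \<noteq> \<zero>\<^bsub>R\<^esub>" then show "g n \<noteq> \<zero>\<^bsub>R Quot J\<^esub>" using f by blast
  next
    fix n assume "g n \<noteq> \<zero>\<^bsub>R Quot J\<^esub>" then show "f n \<noteq> \<zero>\<^bsub>R\<^esub>" using f h.hom_zero by metis
  qed
  then show ?thesis
  proof (intro that)
    show "\<forall>n. f n \<in> G n" using f by blast
    show "\<forall>n. J +>\<^bsub>R\<^esub> f n = g n" using f by blast
  qed
qed

lemma in_sum_lift:
  assumes "in_sum (R Quot J) (quot_grading R J G) S y"
  shows "\<exists>x. in_sum R G S x \<and> J +>\<^bsub>R\<^esub> x = y"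
proof -
  obtain g where g: "\<forall>n. g n \<in> quot_grading R J G n" "finite {n. g n \<noteq> \<zero>\<^bsub>R Quot J\<^esub>}"
    "{n. g n \<noteq> \<zero>\<^bsub>R Quot J\<^esub>} \<subseteq> S" "y = finsum (R Quot J) g {n. g n \<noteq> \<zero>\<^bsub>R Quot J\<^esub>}"
    using assms unfolding in_sum_def by blast
  obtain f where f: "\<forall>n. f n \<in> G n" "\<forall>n. J +>\<^bsub>R\<^esub> f n = g n"
     "{n. f n \<noteq> \<zero>\<^bsub>R\<^esub>} = {n. g n \<noteq> \<zero>\<^bsub>R Quot J\<^esub>}" using lift_fun[OF g(1)] by blast
  define x where "x = (\<Oplus>\<^bsub>R\<^esub>n\<in>{n. f n \<noteq> \<zero>\<^bsub>R\<^esub>}. f n)"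
  have fc: "f \<in> A \<rightarrow> carrier R" for A using f(1) Gsub by (auto simp: Pi_def)
  have "J +>\<^bsub>R\<^esub> x = finsum (R Quot J) ((\<lambda>r. J +>\<^bsub>R\<^esub> r) \<circ> f) {n. f n \<noteq> \<zero>\<^bsub>R\<^esub>}"
    unfolding x_def using fc by simp
  also have "\<dots> = y" using g(4) f(2,3) by (simp add: o_def)
  finally have ex: "J +>\<^bsub>R\<^esub> x = y" .
  have "in_sum R G S x" unfolding in_sum_def
  proof (intro exI conjI)
    show "\<forall>n. f n \<in> G n" by (rule f(1))
    show "finite {n. f n \<noteq> \<zero>\<^bsub>R\<^esub>}" using f(3) g(2) by simp
    show "{n. f n \<noteq> \<zero>\<^bsub>R\<^esub>} \<subseteq> S" using f(3) g(3) by simp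
    show "x = (\<Oplus>\<^bsub>R\<^esub>n\<in>{n. f n \<noteq> \<zero>\<^bsub>R\<^esub>}. f n)" by (rule x_def)
  qed
  then show ?thesis using ex by blast
qed


lemma dsR: "direct_sum_decomp R G" using sg by (simp add: semi_graded_def)

lemma quot_unique:
  assumes f: "\<forall>n. f n \<in> quot_grading R J G n" "finite {n. f n \<noteq> \<zero>\<^bsub>R Quot J\<^esub>}"
    and g: "\<forall>n. g n \<in> quot_grading R J G n" "finite {n. g n \<noteq> \<zero>\<^bsub>R Quot J\<^esub>}"
    and eq: "finsum (R Quot J) f {n. f n \<noteq> \<zero>\<^bsub>R Quot J\<^esub>} = finsum (R Quot J) g {n. g n \<noteq> \<zero>\<^bsub>R Quot J\<^esub>}"
  shows "f = g"
proof -
  obtain f' where f': "\<forall>n. f' n \<in> G n" "\<forall>n. J +>\<^bsub>R\<^esub> f' n = f n"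
     "{n. f' n \<noteq> \<zero>\<^bsub>R\<^esub>} = {n. f n \<noteq> \<zero>\<^bsub>R Quot J\<^esub>}" using lift_fun[OF f(1)] by blast
  obtain g' where g': "\<forall>n. g' n \<in> G n" "\<forall>n. J +>\<^bsub>R\<^esub> g' n = g n"
     "{n. g' n \<noteq> \<zero>\<^bsub>R\<^esub>} = {n. g n \<noteq> \<zero>\<^bsub>R Quot J\<^esub>}" using lift_fun[OF g(1)] by blast
  define A where "A = {n. f n \<noteq> \<zero>\<^bsub>R Quot J\<^esub>} \<union> {n. g n \<noteq> \<zero>\<^bsub>R Quot J\<^esub>}"
  have finA: "finite A" using f g by (simp add: A_def)
  have f'c: "f' n \<in> carrier R" for n using f' Gsub by blast
  have g'c: "g' n \<in> carrier R" for n using g' Gsub by blast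
  have fQ: "f n \<in> carrier (R Quot J)" for n using f'(2) f'c by (metis h.hom_closed)
  have gQ: "g n \<in> carrier (R Quot J)" for n using g'(2) g'c by (metis h.hom_closed)
  define d where "d n = f' n \<ominus>\<^bsub>R\<^esub> g' n" for n
  have dc: "d n \<in> carrier R" for n using f'c g'c by (simp add: d_def)
  have dG: "d n \<in> G n" for n
    using f'(1) g'(1) Gsg[of n] by (simp add: d_def a_minus_def additive_subgroup.a_closed additive_subgroup.a_inv_closed)
  have dA: "{n. d n \<noteq> \<zero>\<^bsub>R\<^esub>} \<subseteq> A"
  proof
    fix n assume "n \<in> {n. d n \<noteq> \<zero>\<^bsub>R\<^esub>}"
    then have "f' n \<noteq> \<zero>\<^bsub>R\<^esub> \<or> g' n \<noteq> \<zero>\<^bsub>R\<^esub>" by (auto simp: d_def)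
    then show "n \<in> A" using f'(3) g'(3) unfolding A_def by blast
  qed
  have dg: "d n \<oplus>\<^bsub>R\<^esub> g' n = f' n" for n
    using f'c g'c by (simp add: d_def a_minus_def a_assoc l_neg)
  have sumQ: "finsum (R Quot J) f {n. f n \<noteq> \<zero>\<^bsub>R Quot J\<^esub>} = J +>\<^bsub>R\<^esub> finsum R f' A"
  proof -
    have "J +>\<^bsub>R\<^esub> finsum R f' A = finsum (R Quot J) ((\<lambda>r. J +>\<^bsub>R\<^esub> r) \<circ> f') A"
      using f'c by simp
    also have "\<dots> = finsum (R Quot J) f A" using f'(2) by (simp add: o_def)
    also have "\<dots> = finsum (R Quot J) f {n. f n \<noteq> \<zero>\<^bsub>R Quot J\<^esub>}"
      by (rule Q.add.finprod_mono_neutral_cong_right) (use finA fQ in \<open>auto simp: A_def\<close>)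
    finally show ?thesis by simp
  qed
  have sumQg: "finsum (R Quot J) g {n. g n \<noteq> \<zero>\<^bsub>R Quot J\<^esub>} = J +>\<^bsub>R\<^esub> finsum R g' A"
  proof -
    have "J +>\<^bsub>R\<^esub> finsum R g' A = finsum (R Quot J) ((\<lambda>r. J +>\<^bsub>R\<^esub> r) \<circ> g') A"
      using g'c by simp
    also have "\<dots> = finsum (R Quot J) g A" using g'(2) by (simp add: o_def)
    also have "\<dots> = finsum (R Quot J) g {n. g n \<noteq> \<zero>\<^bsub>R Quot J\<^esub>}"
      by (rule Q.add.finprod_mono_neutral_cong_right) (use finA gQ in \<open>auto simp: A_def\<close>)
    finally show ?thesis by simp
  qed
  define y where "y = finsum R d A"
  have yc: "y \<in> carrier R" using dc by (simp add: y_def Pi_def)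
  have "y \<oplus>\<^bsub>R\<^esub> finsum R g' A = finsum R f' A"
    using dc g'c dg by (simp add: y_def Pi_def flip: finsum_addf)
  then have e1: "J +>\<^bsub>R\<^esub> (y \<oplus>\<^bsub>R\<^esub> finsum R g' A) = J +>\<^bsub>R\<^esub> finsum R f' A" by simp
  have sgc: "finsum R g' A \<in> carrier R" using g'c by (intro finsum_closed) auto
  have e2: "J +>\<^bsub>R\<^esub> finsum R f' A = J +>\<^bsub>R\<^esub> finsum R g' A" using eq sumQ sumQg by metis
  have "(J +>\<^bsub>R\<^esub> y) \<oplus>\<^bsub>R Quot J\<^esub> (J +>\<^bsub>R\<^esub> finsum R g' A) = J +>\<^bsub>R\<^esub> finsum R g' A"
    using e1 e2 h.hom_add[OF yc sgc] by metis
  also have "\<dots> = \<zero>\<^bsub>R Quot J\<^esub> \<oplus>\<^bsub>R Quot J\<^esub> (J +>\<^bsub>R\<^esub> finsum R g' A)"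
    using sgc by simp
  finally have "J +>\<^bsub>R\<^esub> y = \<zero>\<^bsub>R Quot J\<^esub>"
    using yc sgc by (simp add: Q.add.r_cancel)
  then have yJ: "y \<in> J" using piz yc by blast
  obtain j where j: "\<forall>n. j n \<in> J \<inter> G n" "finite {n. j n \<noteq> \<zero>\<^bsub>R\<^esub>}"
    "y = (\<Oplus>\<^bsub>R\<^esub>n\<in>{n. j n \<noteq> \<zero>\<^bsub>R\<^esub>}. j n)"
    using sgJ yJ unfolding sg_ideal_def in_sum_def by blast
  have yd: "y = (\<Oplus>\<^bsub>R\<^esub>n\<in>{n. d n \<noteq> \<zero>\<^bsub>R\<^esub>}. d n)"
    unfolding y_def
    by (rule add.finprod_mono_neutral_cong_right) (use finA dA dc in auto)
  have finD: "finite {n. d n \<noteq> \<zero>\<^bsub>R\<^esub>}" using finA dA by (rule finite_subset[rotated])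
  from dsR yc have "\<exists>!f. (\<forall>n. f n \<in> G n) \<and> finite {n. f n \<noteq> \<zero>\<^bsub>R\<^esub>}
        \<and> y = (\<Oplus>\<^bsub>R\<^esub>n\<in>{n. f n \<noteq> \<zero>\<^bsub>R\<^esub>}. f n)" unfolding direct_sum_decomp_def by blast
  then have "d = j" using j yd finD dG by blast
  then have dJ: "d n \<in> J" for n using j by blast
  show "f = g"
  proof
    fix n
    have "f n = J +>\<^bsub>R\<^esub> (d n \<oplus>\<^bsub>R\<^esub> g' n)" using dg f'(2) by metis
    also have "\<dots> = (J +>\<^bsub>R\<^esub> d n) \<oplus>\<^bsub>R Quot J\<^esub> (J +>\<^bsub>R\<^esub> g' n)" using dc g'c by simp
    also have "\<dots> = \<zero>\<^bsub>R Quot J\<^esub> \<oplus>\<^bsub>R Quot J\<^esub> g n" using piz[OF dc[of n]] dJ[of n] g'(2) by simp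
    also have "\<dots> = g n" using gQ by simp
    finally show "f n = g n" .
  qed
qed

lemma quot_ds: "direct_sum_decomp (R Quot J) (quot_grading R J G)"
  unfolding direct_sum_decomp_def
proof (intro conjI allI ballI)
  fix n
  show "additive_subgroup (quot_grading R J G n) (R Quot J)"
    unfolding additive_subgroup_def quot_grading_def
    using h.img_is_add_subgroup Gsg[of n] by (simp add: additive_subgroup_def)
next
  fix x assume "x \<in> carrier (R Quot J)"
  then obtain r where r: "r \<in> carrier R" "x = J +>\<^bsub>R\<^esub> r" using carQ by blast
  from dsR r(1) obtain f where "(\<forall>n. f n \<in> G n) \<and> finite {n. f n \<noteq> \<zero>\<^bsub>R\<^esub>}
        \<and> r = (\<Oplus>\<^bsub>R\<^esub>n\<in>{n. f n \<noteq> \<zero>\<^bsub>R\<^esub>}. f n)" unfolding direct_sum_decomp_def by blast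
  then have "in_sum R G UNIV r" unfolding in_sum_def by blast
  then have "in_sum (R Quot J) (quot_grading R J G) UNIV x"
    unfolding r(2) by (rule in_sum_img[OF _ Gsub]) (auto simp: quot_grading_def)
  then obtain g where g: "\<forall>n. g n \<in> quot_grading R J G n" "finite {n. g n \<noteq> \<zero>\<^bsub>R Quot J\<^esub>}"
    "x = finsum (R Quot J) g {n. g n \<noteq> \<zero>\<^bsub>R Quot J\<^esub>}" unfolding in_sum_def by blast
  show "\<exists>!f. (\<forall>n. f n \<in> quot_grading R J G n) \<and> finite {n. f n \<noteq> \<zero>\<^bsub>R Quot J\<^esub>} \<and>
            x = (\<Oplus>\<^bsub>R Quot J\<^esub>n\<in>{n. f n \<noteq> \<zero>\<^bsub>R Quot J\<^esub>}. f n)"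
  proof (rule ex1I[of _ g])
    show "(\<forall>n. g n \<in> quot_grading R J G n) \<and> finite {n. g n \<noteq> \<zero>\<^bsub>R Quot J\<^esub>} \<and>
            x = (\<Oplus>\<^bsub>R Quot J\<^esub>n\<in>{n. g n \<noteq> \<zero>\<^bsub>R Quot J\<^esub>}. g n)" using g by blast
  next
    fix f assume "(\<forall>n. f n \<in> quot_grading R J G n) \<and> finite {n. f n \<noteq> \<zero>\<^bsub>R Quot J\<^esub>} \<and>
            x = (\<Oplus>\<^bsub>R Quot J\<^esub>n\<in>{n. f n \<noteq> \<zero>\<^bsub>R Quot J\<^esub>}. f n)"
    then show "f = g" using g by (intro quot_unique) auto
  qed
qed

lemma quot_sg: "semi_graded (R Quot J) (quot_grading R J G)"
  unfolding semi_graded_def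
proof (intro conjI ballI allI)
  show "ring (R Quot J)" by (rule quotient_is_ring)
  show "direct_sum_decomp (R Quot J) (quot_grading R J G)" by (rule quot_ds)
  show "\<one>\<^bsub>R Quot J\<^esub> \<in> quot_grading R J G 0"
    using sg unfolding semi_graded_def quot_grading_def by (metis h.hom_one image_eqI)
next
  fix m n a b assume a: "a \<in> quot_grading R J G m" and b: "b \<in> quot_grading R J G n"
  then obtain a' b' where ab: "a' \<in> G m" "b' \<in> G n" "a = J +>\<^bsub>R\<^esub> a'" "b = J +>\<^bsub>R\<^esub> b'"
    unfolding quot_grading_def by blast
  have "in_sum R G {..m+n} (a' \<otimes>\<^bsub>R\<^esub> b')" using sg ab unfolding semi_graded_def by blast
  then have "in_sum (R Quot J) (quot_grading R J G) {..m+n} (J +>\<^bsub>R\<^esub> (a' \<otimes>\<^bsub>R\<^esub> b'))"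
    by (rule in_sum_img[OF _ Gsub]) (auto simp: quot_grading_def)
  then show "in_sum (R Quot J) (quot_grading R J G) {..m+n} (a \<otimes>\<^bsub>R Quot J\<^esub> b)"
    using ab Gsub by (metis h.hom_mult subsetD)
qed

lemma quot_psg: "pos_semi_graded R G \<Longrightarrow> pos_semi_graded (R Quot J) (quot_grading R J G)"
  unfolding pos_semi_graded_def using quot_sg by (simp add: quot_grading_def)


lemma ringR: "ring R" using sg by (simp add: semi_graded_def)

lemma in_sum_carrier: assumes "in_sum R G S x" shows "x \<in> carrier R"
proof -
  obtain f where f: "\<forall>n. f n \<in> G n" "x = finsum R f {n. f n \<noteq> \<zero>\<^bsub>R\<^esub>}"
    using assms unfolding in_sum_def by blast
  have "f \<in> {n. f n \<noteq> \<zero>\<^bsub>R\<^esub>} \<rightarrow> carrier R" using f(1) Gsub by (auto simp: Pi_def)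
  then show ?thesis using f(2) by (simp add: finsum_closed)
qed

lemma decomp:
  assumes "x \<in> carrier R"
  obtains f where "\<forall>n. f n \<in> G n" "finite {n. f n \<noteq> \<zero>\<^bsub>R\<^esub>}" "x = finsum R f {n. f n \<noteq> \<zero>\<^bsub>R\<^esub>}"
  using dsR assms unfolding direct_sum_decomp_def by blast

lemma decomp_unique:
  assumes "x \<in> carrier R" "\<forall>n. f n \<in> G n" "finite {n. f n \<noteq> \<zero>\<^bsub>R\<^esub>}" "x = finsum R f {n. f n \<noteq> \<zero>\<^bsub>R\<^esub>}"
    "\<forall>n. g n \<in> G n" "finite {n. g n \<noteq> \<zero>\<^bsub>R\<^esub>}" "x = finsum R g {n. g n \<noteq> \<zero>\<^bsub>R\<^esub>}"
  shows "f = g"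
proof -
  from dsR assms(1) have "\<exists>!f. (\<forall>n. f n \<in> G n) \<and> finite {n. f n \<noteq> \<zero>\<^bsub>R\<^esub>}
        \<and> x = (\<Oplus>\<^bsub>R\<^esub>n\<in>{n. f n \<noteq> \<zero>\<^bsub>R\<^esub>}. f n)" unfolding direct_sum_decomp_def by blast
  then show ?thesis using assms(2-7) by blast
qed

lemma carrier_sg: "sg_ideal R G (carrier R)"
  unfolding sg_ideal_def
proof (intro conjI ballI)
  show "ideal (carrier R) R" by (rule oneideal)
  fix x assume "x \<in> carrier R"
  then obtain f where f: "\<forall>n. f n \<in> G n" "finite {n. f n \<noteq> \<zero>\<^bsub>R\<^esub>}" "x = finsum R f {n. f n \<noteq> \<zero>\<^bsub>R\<^esub>}"
    by (rule decomp)
  show "in_sum R (\<lambda>n. carrier R \<inter> G n) UNIV x" unfolding in_sum_def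
  proof (intro exI conjI)
    show "\<forall>n. f n \<in> carrier R \<inter> G n" using f(1) Gsub by blast
  qed (use f in auto)
qed

lemma Rge_gen: "in_sum R G {int t..} y \<Longrightarrow> y \<in> R_ge R G t"
  unfolding R_ge_def by blast

lemma Rge_carrier: "R_ge R G t \<subseteq> carrier R"
  unfolding R_ge_def
proof (rule Inter_lower)
  have "{x. in_sum R G {int t..} x} \<subseteq> carrier R" using in_sum_carrier by blast
  then show "carrier R \<in> {I. sg_ideal R G I \<and> {x. in_sum R G {int t..} x} \<subseteq> I}"
    using carrier_sg by simp
qed

lemma Rge_sg: "sg_ideal R G (R_ge R G t)"
proof -
  define Is where "Is = {I. sg_ideal R G I \<and> {x. in_sum R G {int t..} x} \<subseteq> I}"
  have C: "carrier R \<in> Is"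
  proof -
    have "{x. in_sum R G {int t..} x} \<subseteq> carrier R" using in_sum_carrier by blast
    then show ?thesis using carrier_sg by (simp add: Is_def)
  qed
  have id: "ideal (\<Inter>Is) R"
  proof (rule i_Intersect)
    show "Is \<noteq> {}" using C by blast
    fix I assume "I \<in> Is" then show "ideal I R" by (simp add: Is_def sg_ideal_def)
  qed
  have "in_sum R (\<lambda>n. \<Inter>Is \<inter> G n) UNIV x" if x: "x \<in> \<Inter>Is" for x
  proof -
    have xc: "x \<in> carrier R" using x C by blast
    obtain f where f: "\<forall>n. f n \<in> G n" "finite {n. f n \<noteq> \<zero>\<^bsub>R\<^esub>}" "x = finsum R f {n. f n \<noteq> \<zero>\<^bsub>R\<^esub>}"
      using xc by (rule decomp)
    have fI: "f n \<in> I" if I: "I \<in> Is" for I n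
    proof -
      have "in_sum R (\<lambda>n. I \<inter> G n) UNIV x" using I x by (auto simp: Is_def sg_ideal_def)
      then obtain j where j: "\<forall>n. j n \<in> I \<inter> G n" "finite {n. j n \<noteq> \<zero>\<^bsub>R\<^esub>}"
        "x = finsum R j {n. j n \<noteq> \<zero>\<^bsub>R\<^esub>}" unfolding in_sum_def by blast
      have jG: "\<forall>n. j n \<in> G n" using j(1) by blast
      have "j = f" using decomp_unique[OF xc jG j(2) j(3) f] .
      then show ?thesis using j(1) by blast
    qed
    show ?thesis unfolding in_sum_def
    proof (intro exI conjI)
      show "\<forall>n. f n \<in> \<Inter>Is \<inter> G n" using fI f(1) by blast
    qed (use f in auto)
  qed
  then show ?thesis using id unfolding sg_ideal_def R_ge_def Is_def by blast
qed

lemma img_sg: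
  assumes "sg_ideal R G K"
  shows "sg_ideal (R Quot J) (quot_grading R J G) ((\<lambda>r. J +>\<^bsub>R\<^esub> r) ` K)"
  unfolding sg_ideal_def
proof (intro conjI ballI)
  have "ideal K R" using assms by (simp add: sg_ideal_def)
  then show "ideal ((\<lambda>r. J +>\<^bsub>R\<^esub> r) ` K) (R Quot J)" using ring_ideal_imp_quot_ideal[OF JI] by simp
  have Ks: "K \<subseteq> carrier R" using \<open>ideal K R\<close> by (simp add: ideal.Icarr subsetI)
  fix x assume "x \<in> (\<lambda>r. J +>\<^bsub>R\<^esub> r) ` K"
  then obtain k where k: "k \<in> K" "x = J +>\<^bsub>R\<^esub> k" by blast
  have "in_sum R (\<lambda>n. K \<inter> G n) UNIV k" using assms k by (simp add: sg_ideal_def)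
  then have "in_sum (R Quot J) (\<lambda>n. (\<lambda>r. J +>\<^bsub>R\<^esub> r) ` K \<inter> quot_grading R J G n) UNIV (J +>\<^bsub>R\<^esub> k)"
    by (rule in_sum_img) (use Ks in \<open>auto simp: quot_grading_def\<close>)
  then show "in_sum (R Quot J) (\<lambda>n. (\<lambda>r. J +>\<^bsub>R\<^esub> r) ` K \<inter> quot_grading R J G n) UNIV x"
    using k by simp
qed

lemma Rge_img: "R_ge (R Quot J) (quot_grading R J G) t \<subseteq> (\<lambda>r. J +>\<^bsub>R\<^esub> r) ` R_ge R G t"
proof -
  have "sg_ideal (R Quot J) (quot_grading R J G) ((\<lambda>r. J +>\<^bsub>R\<^esub> r) ` R_ge R G t)"
    by (rule img_sg[OF Rge_sg])
  moreover have "{x. in_sum (R Quot J) (quot_grading R J G) {int t..} x} \<subseteq> (\<lambda>r. J +>\<^bsub>R\<^esub> r) ` R_ge R G t"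
  proof
    fix y assume "y \<in> {x. in_sum (R Quot J) (quot_grading R J G) {int t..} x}"
    then obtain x where "in_sum R G {int t..} x" "J +>\<^bsub>R\<^esub> x = y" using in_sum_lift by blast
    then show "y \<in> (\<lambda>r. J +>\<^bsub>R\<^esub> r) ` R_ge R G t" using Rge_gen by blast
  qed
  ultimately show ?thesis unfolding R_ge_def[of "R Quot J"] by (intro Inter_lower CollectI conjI)
qed

lemma prod_img:
  assumes "A \<subseteq> carrier R" "B \<subseteq> carrier R"
  shows "ideal_prod (R Quot J) ((\<lambda>r. J +>\<^bsub>R\<^esub> r) ` A) ((\<lambda>r. J +>\<^bsub>R\<^esub> r) ` B)
           \<subseteq> (\<lambda>r. J +>\<^bsub>R\<^esub> r) ` ideal_prod R A B"
proof
  fix z assume "z \<in> ideal_prod (R Quot J) ((\<lambda>r. J +>\<^bsub>R\<^esub> r) ` A) ((\<lambda>r. J +>\<^bsub>R\<^esub> r) ` B)"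
  then show "z \<in> (\<lambda>r. J +>\<^bsub>R\<^esub> r) ` ideal_prod R A B"
  proof (induct z rule: ideal_prod.induct)
    case (prod i j)
    then obtain a b where ab: "a \<in> A" "b \<in> B" "i = J +>\<^bsub>R\<^esub> a" "j = J +>\<^bsub>R\<^esub> b" by blast
    then have "i \<otimes>\<^bsub>R Quot J\<^esub> j = J +>\<^bsub>R\<^esub> (a \<otimes>\<^bsub>R\<^esub> b)" using assms by (simp add: subsetD)
    moreover have "a \<otimes>\<^bsub>R\<^esub> b \<in> ideal_prod R A B" using ab(1,2) by (rule ideal_prod.prod)
    ultimately show ?case by blast
  next
    case (sum s1 s2)
    then obtain x1 x2 where xs: "x1 \<in> ideal_prod R A B" "x2 \<in> ideal_prod R A B"
      "s1 = J +>\<^bsub>R\<^esub> x1" "s2 = J +>\<^bsub>R\<^esub> x2" by blast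
    have "x1 \<in> carrier R" "x2 \<in> carrier R" using xs(1,2) ideal_prod_carrier[OF ringR assms] by blast+
    then have "s1 \<oplus>\<^bsub>R Quot J\<^esub> s2 = J +>\<^bsub>R\<^esub> (x1 \<oplus>\<^bsub>R\<^esub> x2)" using xs by simp
    moreover have "x1 \<oplus>\<^bsub>R\<^esub> x2 \<in> ideal_prod R A B" using xs(1,2) by (rule ideal_prod.sum)
    ultimately show ?case by blast
  qed
qed

lemma pow_img:
  assumes "K \<subseteq> carrier R" "Xs \<subseteq> (\<lambda>r. J +>\<^bsub>R\<^esub> r) ` K"
  shows "ideal_pow (R Quot J) Xs m \<subseteq> (\<lambda>r. J +>\<^bsub>R\<^esub> r) ` ideal_pow R K m"
proof (induct m)
  case 0 show ?case using carQ by simp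
next
  case (Suc m)
  have P: "ideal_pow R K m \<subseteq> carrier R" by (rule ideal_pow_carrier[OF ringR assms(1)])
  have "ideal_pow (R Quot J) Xs (Suc m) = ideal_prod (R Quot J) (ideal_pow (R Quot J) Xs m) Xs" by simp
  also have "\<dots> \<subseteq> ideal_prod (R Quot J) ((\<lambda>r. J +>\<^bsub>R\<^esub> r) ` ideal_pow R K m) ((\<lambda>r. J +>\<^bsub>R\<^esub> r) ` K)"
    by (rule ideal_prod_mono[OF Suc assms(2)])
  also have "\<dots> \<subseteq> (\<lambda>r. J +>\<^bsub>R\<^esub> r) ` ideal_prod R (ideal_pow R K m) K" by (rule prod_img[OF P assms(1)])
  finally show ?case by simp
qed


lemma noeth:
  assumes ln: "left_noetherian R"
  shows "left_noetherian (R Quot J)"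
  unfolding left_noetherian_def
proof (intro conjI allI impI)
  show "ring (R Quot J)" by (rule quotient_is_ring)
  fix F :: "nat \<Rightarrow> 'a set set"
  assume F: "(\<forall>n. left_ideal (F n) (R Quot J)) \<and> (\<forall>n. F n \<subseteq> F (Suc n))"
  define P where "P n = {x \<in> carrier R. J +>\<^bsub>R\<^esub> x \<in> F n}" for n
  have Pl: "left_ideal (P n) R" for n
  proof -
    have Fs: "additive_subgroup (F n) (R Quot J)"
      and Fm: "\<forall>a\<in>carrier (R Quot J). \<forall>x\<in>F n. a \<otimes>\<^bsub>R Quot J\<^esub> x \<in> F n"
      using F unfolding left_ideal_def by auto
    have "subgroup (P n) (add_monoid R)"
    proof (rule subgroup.intro)
      show "P n \<subseteq> carrier (add_monoid R)" by (auto simp: P_def)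
    next
      fix x y assume "x \<in> P n" "y \<in> P n"
      then have "x \<in> carrier R" "y \<in> carrier R" "J +>\<^bsub>R\<^esub> x \<in> F n" "J +>\<^bsub>R\<^esub> y \<in> F n"
        by (auto simp: P_def)
      then show "x \<otimes>\<^bsub>add_monoid R\<^esub> y \<in> P n"
        using additive_subgroup.a_closed[OF Fs] by (simp add: P_def)
    next
      show "\<one>\<^bsub>add_monoid R\<^esub> \<in> P n"
        using additive_subgroup.zero_closed[OF Fs] by (simp add: P_def)
    next
      fix x assume "x \<in> P n"
      then have "x \<in> carrier R" "J +>\<^bsub>R\<^esub> x \<in> F n" by (auto simp: P_def)
      then show "inv\<^bsub>add_monoid R\<^esub> x \<in> P n"
        using additive_subgroup.a_inv_closed[OF Fs] by (simp add: P_def flip: a_inv_def)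
    qed
    moreover have "\<forall>a\<in>carrier R. \<forall>x\<in>P n. a \<otimes>\<^bsub>R\<^esub> x \<in> P n"
    proof (intro ballI)
      fix a x assume "a \<in> carrier R" "x \<in> P n"
      then have "a \<in> carrier R" "x \<in> carrier R" "J +>\<^bsub>R\<^esub> x \<in> F n" by (auto simp: P_def)
      then show "a \<otimes>\<^bsub>R\<^esub> x \<in> P n" using Fm by (simp add: P_def)
    qed
    ultimately show ?thesis unfolding left_ideal_def additive_subgroup_def by blast
  qed
  have "\<forall>n. P n \<subseteq> P (Suc n)" using F by (auto simp: P_def)
  then obtain N where N: "\<forall>n\<ge>N. P n = P N" using ln Pl unfolding left_noetherian_def by blast
  have FP: "F n = (\<lambda>r. J +>\<^bsub>R\<^esub> r) ` P n" for n
  proof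
    have "F n \<subseteq> carrier (R Quot J)" using F unfolding left_ideal_def
      by (auto dest: additive_subgroup.a_subset)
    then show "F n \<subseteq> (\<lambda>r. J +>\<^bsub>R\<^esub> r) ` P n" using carQ by (auto simp: P_def)
  next
    show "(\<lambda>r. J +>\<^bsub>R\<^esub> r) ` P n \<subseteq> F n" by (auto simp: P_def)
  qed
  show "\<exists>N. \<forall>n\<ge>N. F n = F N" using N FP by metis
qed

lemma R'c_img:
  assumes r: "r \<in> R'_comp R G n"
  shows "J +>\<^bsub>R\<^esub> r \<in> R'_comp (R Quot J) (quot_grading R J G) n"
proof -
  have rG: "r \<in> G n" and rm: "\<forall>m. \<forall>h\<in>G m. r \<otimes>\<^bsub>R\<^esub> h \<in> G (n + m)"
    using r by (auto simp: R'_comp_def)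
  have rc: "r \<in> carrier R" using rG Gsub by blast
  have "J +>\<^bsub>R\<^esub> r \<in> quot_grading R J G n" using rG by (simp add: quot_grading_def)
  moreover have "\<forall>m. \<forall>hb\<in>quot_grading R J G m. (J +>\<^bsub>R\<^esub> r) \<otimes>\<^bsub>R Quot J\<^esub> hb \<in> quot_grading R J G (n + m)"
  proof (intro allI ballI)
    fix m hb assume "hb \<in> quot_grading R J G m"
    then obtain h where h: "h \<in> G m" "hb = J +>\<^bsub>R\<^esub> h" by (auto simp: quot_grading_def)
    have hc: "h \<in> carrier R" using h(1) Gsub by blast
    have "r \<otimes>\<^bsub>R\<^esub> h \<in> G (n + m)" using rm h(1) by blast
    moreover have "(J +>\<^bsub>R\<^esub> r) \<otimes>\<^bsub>R Quot J\<^esub> hb = J +>\<^bsub>R\<^esub> (r \<otimes>\<^bsub>R\<^esub> h)" using h(2) rc hc by simp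
    ultimately show "(J +>\<^bsub>R\<^esub> r) \<otimes>\<^bsub>R Quot J\<^esub> hb \<in> quot_grading R J G (n + m)"
      by (simp add: quot_grading_def)
  qed
  ultimately show ?thesis by (simp add: R'_comp_def)
qed

lemma R''c_img:
  assumes r: "r \<in> R''_comp R G n"
  shows "J +>\<^bsub>R\<^esub> r \<in> R''_comp (R Quot J) (quot_grading R J G) n"
proof -
  have r': "r \<in> R'_comp R G n" and rG: "r \<in> G n" and rm: "\<forall>m. \<forall>h\<in>G m. h \<otimes>\<^bsub>R\<^esub> r \<in> G (n + m)"
    using r by (auto simp: R''_comp_def R'_comp_def)
  have rc: "r \<in> carrier R" using rG Gsub by blast
  have "\<forall>m. \<forall>hb\<in>quot_grading R J G m. hb \<otimes>\<^bsub>R Quot J\<^esub> (J +>\<^bsub>R\<^esub> r) \<in> quot_grading R J G (n + m)"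
  proof (intro allI ballI)
    fix m hb assume "hb \<in> quot_grading R J G m"
    then obtain h where h: "h \<in> G m" "hb = J +>\<^bsub>R\<^esub> h" by (auto simp: quot_grading_def)
    have hc: "h \<in> carrier R" using h(1) Gsub by blast
    have "h \<otimes>\<^bsub>R\<^esub> r \<in> G (n + m)" using rm h(1) by blast
    moreover have "hb \<otimes>\<^bsub>R Quot J\<^esub> (J +>\<^bsub>R\<^esub> r) = J +>\<^bsub>R\<^esub> (h \<otimes>\<^bsub>R\<^esub> r)" using h(2) rc hc by simp
    ultimately show "hb \<otimes>\<^bsub>R Quot J\<^esub> (J +>\<^bsub>R\<^esub> r) \<in> quot_grading R J G (n + m)"
      by (simp add: quot_grading_def)
  qed
  then show ?thesis using R'c_img[OF r'] by (simp add: R''_comp_def)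
qed

lemma R'_img: "r \<in> R' R G \<Longrightarrow> J +>\<^bsub>R\<^esub> r \<in> R' (R Quot J) (quot_grading R J G)"
  unfolding R'_def using R'c_img by blast

lemma R''_img: "r \<in> R'' R G \<Longrightarrow> J +>\<^bsub>R\<^esub> r \<in> R'' (R Quot J) (quot_grading R J G)"
  unfolding R''_def using R''c_img by blast

lemma R'_carrier: "R' R G \<subseteq> carrier R"
  unfolding R'_def R'_comp_def using Gsub by blast

lemma ore_img:
  assumes S: "good_ore_set R G S" and SJ: "S \<inter> J = {}" and comp: "compatible R G J"
  shows "good_ore_set (R Quot J) (quot_grading R J G) ((\<lambda>r. J +>\<^bsub>R\<^esub> r) ` S)"
proof -
  have Sc: "S \<subseteq> carrier R" and S1: "\<one>\<^bsub>R\<^esub> \<in> S" and Sm: "\<forall>s\<in>S. \<forall>t\<in>S. s \<otimes>\<^bsub>R\<^esub> t \<in> S"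
    and So: "\<forall>s\<in>S. \<forall>r\<in>carrier R. \<exists>s'\<in>S. \<exists>r'\<in>carrier R. s' \<otimes>\<^bsub>R\<^esub> r = r' \<otimes>\<^bsub>R\<^esub> s"
    and S2: "S \<subseteq> R'' R G"
    and Sg: "\<forall>s\<in>S. \<forall>r\<in>R' R G. \<exists>u\<in>R' R G. \<exists>v\<in>S. u \<otimes>\<^bsub>R\<^esub> s = v \<otimes>\<^bsub>R\<^esub> r"
    using S unfolding good_ore_set_def left_ore_set_def by auto
  let ?S = "(\<lambda>r. J +>\<^bsub>R\<^esub> r) ` S"
  have "left_ore_set (R Quot J) ?S"
    unfolding left_ore_set_def
  proof (intro conjI ballI)
    show "?S \<subseteq> carrier (R Quot J)" using Sc carQ by auto
    show "\<one>\<^bsub>R Quot J\<^esub> \<in> ?S" using S1 h.hom_one by force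
    show "\<zero>\<^bsub>R Quot J\<^esub> \<notin> ?S"
    proof
      assume "\<zero>\<^bsub>R Quot J\<^esub> \<in> ?S"
      then obtain s where "s \<in> S" "J +>\<^bsub>R\<^esub> s = \<zero>\<^bsub>R Quot J\<^esub>" by auto
      then have "s \<in> J" using piz Sc by blast
      then show False using \<open>s \<in> S\<close> SJ by blast
    qed
  next
    fix a b assume "a \<in> ?S" "b \<in> ?S"
    then obtain s t where st: "s \<in> S" "t \<in> S" "a = J +>\<^bsub>R\<^esub> s" "b = J +>\<^bsub>R\<^esub> t" by blast
    then have "a \<otimes>\<^bsub>R Quot J\<^esub> b = J +>\<^bsub>R\<^esub> (s \<otimes>\<^bsub>R\<^esub> t)" using Sc by (simp add: subsetD)
    moreover have "s \<otimes>\<^bsub>R\<^esub> t \<in> S" using Sm st by blast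
    ultimately show "a \<otimes>\<^bsub>R Quot J\<^esub> b \<in> ?S" by blast
  next
    fix a b assume "a \<in> ?S" "b \<in> carrier (R Quot J)"
    then obtain s r where sr: "s \<in> S" "r \<in> carrier R" "a = J +>\<^bsub>R\<^esub> s" "b = J +>\<^bsub>R\<^esub> r"
      using carQ by blast
    then obtain s' r' where s'r': "s' \<in> S" "r' \<in> carrier R" "s' \<otimes>\<^bsub>R\<^esub> r = r' \<otimes>\<^bsub>R\<^esub> s"
      using So by blast
    have "(J +>\<^bsub>R\<^esub> s') \<otimes>\<^bsub>R Quot J\<^esub> b = (J +>\<^bsub>R\<^esub> r') \<otimes>\<^bsub>R Quot J\<^esub> a"
      using sr s'r' Sc by (metis h.hom_mult subsetD)
    moreover have "J +>\<^bsub>R\<^esub> s' \<in> ?S" "J +>\<^bsub>R\<^esub> r' \<in> carrier (R Quot J)" using s'r' by auto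
    ultimately show "\<exists>s'\<in>?S. \<exists>r'\<in>carrier (R Quot J). s' \<otimes>\<^bsub>R Quot J\<^esub> b = r' \<otimes>\<^bsub>R Quot J\<^esub> a"
      by blast
  qed
  moreover have "?S \<subseteq> R'' (R Quot J) (quot_grading R J G)" using S2 R''_img by blast
  moreover have "\<forall>a\<in>?S. \<forall>b\<in>R' (R Quot J) (quot_grading R J G).
      \<exists>u\<in>R' (R Quot J) (quot_grading R J G). \<exists>v\<in>?S. u \<otimes>\<^bsub>R Quot J\<^esub> a = v \<otimes>\<^bsub>R Quot J\<^esub> b"
  proof (intro ballI)
    fix a b assume a: "a \<in> ?S" and b: "b \<in> R' (R Quot J) (quot_grading R J G)"
    obtain s where s: "s \<in> S" "a = J +>\<^bsub>R\<^esub> s" using a by blast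
    obtain r where r: "r \<in> R' R G" "b = J +>\<^bsub>R\<^esub> r" using b comp unfolding compatible_def by blast
    obtain u v where uv: "u \<in> R' R G" "v \<in> S" "u \<otimes>\<^bsub>R\<^esub> s = v \<otimes>\<^bsub>R\<^esub> r" using Sg s(1) r(1) by blast
    have "(J +>\<^bsub>R\<^esub> u) \<otimes>\<^bsub>R Quot J\<^esub> a = (J +>\<^bsub>R\<^esub> v) \<otimes>\<^bsub>R Quot J\<^esub> b"
      using s r uv Sc R'_carrier by (metis h.hom_mult subsetD)
    moreover have "J +>\<^bsub>R\<^esub> u \<in> R' (R Quot J) (quot_grading R J G)" using uv(1) R'_img by blast
    moreover have "J +>\<^bsub>R\<^esub> v \<in> ?S" using uv(2) by blast
    ultimately show "\<exists>u\<in>R' (R Quot J) (quot_grading R J G). \<exists>v\<in>?S. u \<otimes>\<^bsub>R Quot J\<^esub> a = v \<otimes>\<^bsub>R Quot J\<^esub> b"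
      by blast
  qed
  ultimately show ?thesis unfolding good_ore_set_def by blast
qed


lemma quot_schematic:
  assumes sch: "schematic R G" and comp: "compatible R G J"
  shows "schematic (R Quot J) (quot_grading R J G)"
proof -
  have psg: "pos_semi_graded R G" using sch unfolding schematic_def by (elim conjE)
  have ln: "left_noetherian R" using sch unfolding schematic_def by (elim conjE)
  obtain I where I: "finite I" "\<forall>S\<in>I. good_ore_set R G S \<and> S \<inter> {x. in_sum R G {1..} x} \<noteq> {}"
     "\<forall>x \<in> Pi I (\<lambda>S. S). \<exists>t m. ideal_pow R (R_ge R G t) m \<subseteq> left_ideal_sum R I x"
    using sch unfolding schematic_def by (elim conjE exE) blast
  have Sc: "S \<subseteq> carrier R" if "S \<in> I" for S
  proof -
    have "good_ore_set R G S" using I(2) that by blast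
    then have "left_ore_set R S" unfolding good_ore_set_def by (elim conjE)
    then show ?thesis unfolding left_ore_set_def by (elim conjE)
  qed
  define Ib where "Ib = (\<lambda>S. (\<lambda>r. J +>\<^bsub>R\<^esub> r) ` S) ` {S \<in> I. S \<inter> J = {}}"
  have finIb: "finite Ib" using I(1) by (simp add: Ib_def)
  have IbQ: "T \<subseteq> carrier (R Quot J)" if T: "T \<in> Ib" for T
  proof -
    obtain S where S: "S \<in> I" "T = (\<lambda>r. J +>\<^bsub>R\<^esub> r) ` S" using T unfolding Ib_def by blast
    show ?thesis unfolding S(2) carQ using Sc[OF S(1)] by (rule image_mono)
  qed
  have goodIb: "\<forall>T\<in>Ib. good_ore_set (R Quot J) (quot_grading R J G) T \<and>
        T \<inter> {x. in_sum (R Quot J) (quot_grading R J G) {1..} x} \<noteq> {}"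
  proof
    fix T assume "T \<in> Ib"
    then obtain S where S: "S \<in> I" "S \<inter> J = {}" "T = (\<lambda>r. J +>\<^bsub>R\<^esub> r) ` S" unfolding Ib_def by blast
    have gS: "good_ore_set R G S" using I(2) S(1) by blast
    have g: "good_ore_set (R Quot J) (quot_grading R J G) T"
      unfolding S(3) by (rule ore_img[OF gS S(2) comp])
    obtain x where x: "x \<in> S" "in_sum R G {1..} x" using I(2) S(1) by blast
    have "in_sum (R Quot J) (quot_grading R J G) {1..} (J +>\<^bsub>R\<^esub> x)"
      by (rule in_sum_img[OF x(2) Gsub]) (simp add: quot_grading_def)
    then have "J +>\<^bsub>R\<^esub> x \<in> T \<inter> {x. in_sum (R Quot J) (quot_grading R J G) {1..} x}"
      using x(1) S(3) by blast
    then show "good_ore_set (R Quot J) (quot_grading R J G) T \<and>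
        T \<inter> {x. in_sum (R Quot J) (quot_grading R J G) {1..} x} \<noteq> {}" using g by blast
  qed
  have powIb: "\<exists>t m. ideal_pow (R Quot J) (R_ge (R Quot J) (quot_grading R J G) t) m
                       \<subseteq> left_ideal_sum (R Quot J) Ib xb" if xb: "xb \<in> Pi Ib (\<lambda>T. T)" for xb
  proof -
    have xbc: "xb \<in> Ib \<rightarrow> carrier (R Quot J)" using xb IbQ by (auto simp: Pi_def)
    have xbS: "xb ((\<lambda>r. J +>\<^bsub>R\<^esub> r) ` S) \<in> (\<lambda>r. J +>\<^bsub>R\<^esub> r) ` S" if "S \<in> I" "S \<inter> J = {}" for S
    proof -
      have "(\<lambda>r. J +>\<^bsub>R\<^esub> r) ` S \<in> Ib" using that unfolding Ib_def by blast
      then show ?thesis using xb by (simp add: Pi_iff)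
    qed
    define x where "x S = (if S \<inter> J = {} then (SOME y. y \<in> S \<and> J +>\<^bsub>R\<^esub> y = xb ((\<lambda>r. J +>\<^bsub>R\<^esub> r) ` S))
                           else (SOME y. y \<in> S \<inter> J))" for S
    have x1: "x S \<in> S \<and> J +>\<^bsub>R\<^esub> x S = xb ((\<lambda>r. J +>\<^bsub>R\<^esub> r) ` S)" if "S \<in> I" "S \<inter> J = {}" for S
    proof -
      have "\<exists>y. y \<in> S \<and> J +>\<^bsub>R\<^esub> y = xb ((\<lambda>r. J +>\<^bsub>R\<^esub> r) ` S)" using xbS[OF that] by blast
      then have "(SOME y. y \<in> S \<and> J +>\<^bsub>R\<^esub> y = xb ((\<lambda>r. J +>\<^bsub>R\<^esub> r) ` S)) \<in> S \<and>
          J +>\<^bsub>R\<^esub> (SOME y. y \<in> S \<and> J +>\<^bsub>R\<^esub> y = xb ((\<lambda>r. J +>\<^bsub>R\<^esub> r) ` S)) = xb ((\<lambda>r. J +>\<^bsub>R\<^esub> r) ` S)"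
        by (rule someI_ex)
      then show ?thesis unfolding x_def using that(2) by simp
    qed
    have x2: "x S \<in> S \<inter> J" if "S \<in> I" "S \<inter> J \<noteq> {}" for S
    proof -
      have "\<exists>y. y \<in> S \<inter> J" using that(2) by blast
      then have "(SOME y. y \<in> S \<inter> J) \<in> S \<inter> J" by (rule someI_ex)
      then show ?thesis unfolding x_def using that(2) by simp
    qed
    have xPi: "x \<in> Pi I (\<lambda>S. S)"
    proof
      fix S assume "S \<in> I" then show "x S \<in> S" using x1 x2 by (cases "S \<inter> J = {}") auto
    qed
    have xc: "x S \<in> carrier R" if "S \<in> I" for S
    proof -
      have "x S \<in> S" using xPi that by (simp add: Pi_iff)
      then show ?thesis using Sc[OF that] by blast
    qed
    obtain t m where tm: "ideal_pow R (R_ge R G t) m \<subseteq> left_ideal_sum R I x" using I(3) xPi by blast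
    have QR: "ring (R Quot J)" by (rule quotient_is_ring)
    have "ideal_pow (R Quot J) (R_ge (R Quot J) (quot_grading R J G) t) m
            \<subseteq> (\<lambda>r. J +>\<^bsub>R\<^esub> r) ` ideal_pow R (R_ge R G t) m"
      by (rule pow_img[OF Rge_carrier Rge_img])
    also have "\<dots> \<subseteq> (\<lambda>r. J +>\<^bsub>R\<^esub> r) ` left_ideal_sum R I x" using tm by (rule image_mono)
    also have "\<dots> \<subseteq> left_ideal_sum (R Quot J) Ib xb"
    proof
      fix z assume "z \<in> (\<lambda>r. J +>\<^bsub>R\<^esub> r) ` left_ideal_sum R I x"
      then obtain r where r: "r \<in> I \<rightarrow> carrier R" "z = J +>\<^bsub>R\<^esub> (\<Oplus>\<^bsub>R\<^esub>S\<in>I. r S \<otimes>\<^bsub>R\<^esub> x S)"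
        unfolding left_ideal_sum_def by blast
      have rxc: "(\<lambda>S. r S \<otimes>\<^bsub>R\<^esub> x S) \<in> I \<rightarrow> carrier R" using r(1) xc by (auto simp: Pi_def)
      have "z = finsum (R Quot J) ((\<lambda>r. J +>\<^bsub>R\<^esub> r) \<circ> (\<lambda>S. r S \<otimes>\<^bsub>R\<^esub> x S)) I"
        using r(2) rxc by (simp only: h.hom_finsum)
      also have "\<dots> \<in> left_ideal_sum (R Quot J) Ib xb"
      proof (rule finsum_in_set[OF QR I(1)])
        show "\<zero>\<^bsub>R Quot J\<^esub> \<in> left_ideal_sum (R Quot J) Ib xb" by (rule lis_zero[OF QR xbc])
        show "\<forall>a\<in>left_ideal_sum (R Quot J) Ib xb. \<forall>b\<in>left_ideal_sum (R Quot J) Ib xb.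
                 a \<oplus>\<^bsub>R Quot J\<^esub> b \<in> left_ideal_sum (R Quot J) Ib xb"
          using lis_add[OF QR xbc] by blast
        show "left_ideal_sum (R Quot J) Ib xb \<subseteq> carrier (R Quot J)" by (rule lis_carrier[OF QR xbc])
        show "\<forall>S\<in>I. ((\<lambda>r. J +>\<^bsub>R\<^esub> r) \<circ> (\<lambda>S. r S \<otimes>\<^bsub>R\<^esub> x S)) S \<in> left_ideal_sum (R Quot J) Ib xb"
        proof
          fix S assume S: "S \<in> I"
          have rS: "r S \<in> carrier R" using r(1) S by blast
          have eqS: "((\<lambda>r. J +>\<^bsub>R\<^esub> r) \<circ> (\<lambda>S. r S \<otimes>\<^bsub>R\<^esub> x S)) S
                  = (J +>\<^bsub>R\<^esub> r S) \<otimes>\<^bsub>R Quot J\<^esub> (J +>\<^bsub>R\<^esub> x S)"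
            using rS xc[OF S] by simp
          show "((\<lambda>r. J +>\<^bsub>R\<^esub> r) \<circ> (\<lambda>S. r S \<otimes>\<^bsub>R\<^esub> x S)) S \<in> left_ideal_sum (R Quot J) Ib xb"
          proof (cases "S \<inter> J = {}")
            case True
            have T: "(\<lambda>r. J +>\<^bsub>R\<^esub> r) ` S \<in> Ib" using S True unfolding Ib_def by blast
            have "(J +>\<^bsub>R\<^esub> r S) \<otimes>\<^bsub>R Quot J\<^esub> xb ((\<lambda>r. J +>\<^bsub>R\<^esub> r) ` S) \<in> left_ideal_sum (R Quot J) Ib xb"
              using rS by (intro lis_single[OF QR finIb xbc T]) simp
            then show ?thesis using eqS x1[OF S True] by simp
          next
            case False
            have "J +>\<^bsub>R\<^esub> x S = \<zero>\<^bsub>R Quot J\<^esub>" using x2[OF S False] piz xc[OF S] by blast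
            then have "((\<lambda>r. J +>\<^bsub>R\<^esub> r) \<circ> (\<lambda>S. r S \<otimes>\<^bsub>R\<^esub> x S)) S = \<zero>\<^bsub>R Quot J\<^esub>"
              using eqS rS by simp
            then show ?thesis using lis_zero[OF QR xbc] by simp
          qed
        qed
      qed
      finally show "z \<in> left_ideal_sum (R Quot J) Ib xb" .
    qed
    finally show ?thesis by (intro exI)
  qed
  show ?thesis unfolding schematic_def
  proof (intro conjI)
    show "pos_semi_graded (R Quot J) (quot_grading R J G)" by (rule quot_psg[OF psg])
    show "left_noetherian (R Quot J)" by (rule noeth[OF ln])
    show "\<exists>I. finite I \<and>
        (\<forall>S\<in>I. good_ore_set (R Quot J) (quot_grading R J G) S \<and>
          S \<inter> {x. in_sum (R Quot J) (quot_grading R J G) {1..} x} \<noteq> {}) \<and>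
        (\<forall>x\<in>Pi I (\<lambda>S. S). \<exists>t m. ideal_pow (R Quot J) (R_ge (R Quot J) (quot_grading R J G) t) m
             \<subseteq> left_ideal_sum (R Quot J) I x)"
    proof (intro exI[of _ Ib] conjI)
      show "finite Ib" by (rule finIb)
      show "\<forall>S\<in>Ib. good_ore_set (R Quot J) (quot_grading R J G) S \<and>
          S \<inter> {x. in_sum (R Quot J) (quot_grading R J G) {1..} x} \<noteq> {}" by (rule goodIb)
      show "\<forall>x\<in>Pi Ib (\<lambda>S. S). \<exists>t m. ideal_pow (R Quot J) (R_ge (R Quot J) (quot_grading R J G) t) m
             \<subseteq> left_ideal_sum (R Quot J) Ib x" using powIb by (intro ballI)
    qed
  qed
qed

end

theorem mainTheorem9:
  fixes R :: "('a, 'b) ring_scheme" and G :: "int \<Rightarrow> 'a set" and J :: "'a set"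
  assumes "schematic R G"
    and "sg_ideal R G J"
    and "compatible R G J"
  shows "schematic (R Quot J) (quot_grading R J G)"
proof -
  have "semi_graded R G" using assms(1) by (simp add: schematic_def pos_semi_graded_def)
  then show ?thesis using quot_schematic[OF _ assms(2) assms(1) assms(3)] by blast
qed

end
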